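(* Let $0<p<1/2$ be a constant, let $\varepsilon,\delta\in(0,1)$, and let $T$ be a tree with $n$ edges, each of which is either realized or not, accessed through a 2-sided noisy oracle with error probability $p$. Consider the following algorithm $\mathcal{A}$ (with parameters $\varepsilon,\delta,p$). Set $c=\lceil \log_{\frac{1-p}{p}}(1/\delta)\rceil$ (the threshold) and a global budget $B=\lceil \frac{1}{\varepsilon}\cdot\frac{1}{1-2p}\rceil\cdot c\cdot n$. Process the edges of $T$ one after another in a fixed order. For the current edge $e$, set a counter to $0$; while the counter is $<c$ and $B>0$: query $e$, decrease $B$ by $1$, and increase the counter by $1$ if the answer is ``Yes'' and decrease it by $1$ if the answer is ``No''. After this loop, if $B=0$, output False (``disconnected'') and stop; otherwise move to the next edge. If all edges are processed, output True (``connected''). Then: if all edges of $T$ are realized ($T$ is connected), $\mathcal{A}$ outputs True with probability at least $1-\varepsilon$; if at least one edge of $T$ is not realized ($T$ is disconnected), $\mathcal{A}$ outputs False with probability at least $1-\delta$; and $\mathcal{A}$ performs at most $O\!\left(\frac{1}{\varepsilon}\, n\log\frac{1}{\delta}\right)$ queries.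
   Context: Noisy edge-query model: each edge of a given graph is either realized or non-realized (fixed arbitrarily, possibly adversarially, in advance). An algorithm can query an oracle on an edge $e$, asking ``Is $e$ realized?'', and receives ``Yes'' or ``No''; each query costs $1$. Answers to distinct queries (including repeated queries on the same edge) are independent. In the 2-sided error regime with error probability $p<1/2$ (a constant), each answer is wrong (``No'' for a realized edge, ``Yes'' for a non-realized edge) with probability $p$ and correct with probability $1-p$. A tree is called connected if all its edges are realized and disconnected otherwise. *)

theory Defs
  imports "HOL-Probability.Probability_Mass_Function"
begin

text \<open>One noisy edge-query answer for an edge whose realization status is r:
  correct (= r) with probability 1 - p, wrong with probability p.
  Distinct calls are independent (each call is a fresh bind).\<close>
definition noisy_answer :: "real \<Rightarrow> bool \<Rightarrow> bool pmf" where
  "noisy_answer p r = map_pmf (\<lambda>b. if b then r else \<not> r) (bernoulli_pmf (1 - p))"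

text \<open>The algorithm's run: threshold c, remaining edges (realization status,
  in processing order), counter k for the current (head) edge, remaining budget B.
  The result is (output, number of queries performed).\<close>
function alg_run :: "real \<Rightarrow> nat \<Rightarrow> bool list \<Rightarrow> int \<Rightarrow> nat \<Rightarrow> (bool \<times> nat) pmf" where
  "alg_run p c [] k B = return_pmf (True, 0)"
| "alg_run p c (e # es) k B =
     (if k < int c \<and> B > 0 then
        bind_pmf (noisy_answer p e) (\<lambda>a.
          map_pmf (\<lambda>(r, q). (r, Suc q))
            (alg_run p c (e # es) (if a then k + 1 else k - 1) (B - 1)))
      else if B = 0 then return_pmf (False, 0)
      else alg_run p c es 0 B)"
  by pat_completeness auto
termination
  by (relation "measures [\<lambda>(_, _, _, _, B). B, \<lambda>(_, _, es, _, _). length es]") auto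

definition threshold :: "real \<Rightarrow> real \<Rightarrow> nat" where
  "threshold p \<delta> = nat \<lceil>log ((1 - p) / p) (1 / \<delta>)\<rceil>"

definition budget :: "real \<Rightarrow> real \<Rightarrow> real \<Rightarrow> nat \<Rightarrow> nat" where
  "budget p \<epsilon> \<delta> n = nat \<lceil>(1 / \<epsilon>) * (1 / (1 - 2 * p))\<rceil> * threshold p \<delta> * n"

text \<open>Algorithm A with parameters eps, delta, p on a tree given by the list of its
  edges' realization statuses (length = number of edges n).\<close>
definition alg_A :: "real \<Rightarrow> real \<Rightarrow> real \<Rightarrow> bool list \<Rightarrow> (bool \<times> nat) pmf" where
  "alg_A p \<epsilon> \<delta> T = alg_run p (threshold p \<delta>) T 0 (budget p \<epsilon> \<delta> (length T))"

end

theory Submission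
  imports Defs
begin

lemma prob_noisy_bind:
  assumes "0 \<le> p" "p \<le> 1"
  shows "measure_pmf.prob (bind_pmf (noisy_answer p e) f) A =
     (1 - p) * measure_pmf.prob (f e) A + p * measure_pmf.prob (f (\<not> e)) A"
proof -
  have "ennreal (measure_pmf.prob (bind_pmf (noisy_answer p e) f) A) =
     emeasure (measure_pmf (bind_pmf (noisy_answer p e) f)) A"
    by (simp add: measure_pmf.emeasure_eq_measure)
  also have "\<dots> = (\<integral>\<^sup>+x. emeasure (f x) A \<partial>(noisy_answer p e))"
    by (rule emeasure_bind_pmf)
  also have "\<dots> = (\<integral>\<^sup>+x. emeasure (f (if x then e else \<not> e)) A \<partial>(bernoulli_pmf (1 - p)))"
    by (simp add: noisy_answer_def)
  also have "\<dots> = emeasure (f e) A * ennreal (1 - p) + emeasure (f (\<not> e)) A * ennreal (1 - (1 - p))"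
    using assms by (subst nn_integral_bernoulli_pmf) auto
  also have "\<dots> = ennreal (measure_pmf.prob (f e) A) * ennreal (1 - p) + ennreal (measure_pmf.prob (f (\<not> e)) A) * ennreal p"
    by (simp add: measure_pmf.emeasure_eq_measure)
  also have "\<dots> = ennreal ((1 - p) * measure_pmf.prob (f e) A + p * measure_pmf.prob (f (\<not> e)) A)"
    using assms by (simp add: ennreal_mult'' ennreal_plus mult.commute)
  finally show ?thesis
    using assms by (subst (asm) ennreal_inj) auto
qed

declare alg_run.simps(2)[simp del]

lemma run_step:
  "k < int c \<Longrightarrow> B > 0 \<Longrightarrow> alg_run p c (e # es) k B =
        bind_pmf (noisy_answer p e) (\<lambda>a.
          map_pmf (\<lambda>(r, q). (r, Suc q))
            (alg_run p c (e # es) (if a then k + 1 else k - 1) (B - 1)))"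
  by (subst alg_run.simps(2)) simp

lemma run_zero:
  "\<not> (k < int c \<and> B > 0) \<Longrightarrow> B = 0 \<Longrightarrow> alg_run p c (e # es) k B = return_pmf (False, 0)"
  by (subst alg_run.simps(2)) simp

lemma run_next:
  "\<not> (k < int c \<and> B > 0) \<Longrightarrow> B \<noteq> 0 \<Longrightarrow> alg_run p c (e # es) k B = alg_run p c es 0 B"
  by (subst alg_run.simps(2)) simp

lemma prob_map_suc:
  "measure_pmf.prob (map_pmf (\<lambda>(r, q). (r, Suc q)) M) {x. P (fst x)} = measure_pmf.prob M {x. P (fst x)}"
proof -
  have "(\<lambda>(r, q). (r, Suc q)) -` {x. P (fst x)} = {x. P (fst x)}" by auto
  then show ?thesis by simp
qed

lemma queries_le:
  "x \<in> set_pmf (alg_run p c es k B) \<Longrightarrow> snd x \<le> B"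
proof (induction p c es k B arbitrary: x rule: alg_run.induct)
  case (1 p c k B)
  then show ?case by simp
next
  case (2 p c e es k B)
  show ?case
  proof (cases "k < int c \<and> B > 0")
    case True
    then obtain a y where a: "a \<in> set_pmf (noisy_answer p e)" and y: "y \<in> set_pmf (alg_run p c (e # es) (if a then k + 1 else k - 1) (B - 1))"
      and xy: "x = (fst y, Suc (snd y))"
      using 2(3) by (auto simp: run_step split_beta)
    have "snd y \<le> B - 1" using 2(1)[OF True a y] by simp
    then show ?thesis using xy True by auto
  next
    case False
    show ?thesis
    proof (cases "B = 0")
      case True
      then show ?thesis using 2(3) run_zero[OF False True] by simp
    next
      case B: False
      then show ?thesis using 2(2)[OF False B] 2(3) run_next[OF False] by simp
    qed
  qed
qed

lemma fst_case_suc[simp]: "fst (case y of (r, q) \<Rightarrow> (r, Suc q)) = fst y"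
  by (cases y) auto

lemma set_noisy: "0 < p \<Longrightarrow> p < 1 \<Longrightarrow> set_pmf (noisy_answer p r) = UNIV"
  unfolding noisy_answer_def by (auto simp: image_iff intro: exI[of _ True] exI[of _ False])

lemma conn_bound:
  shows "0 < p \<Longrightarrow> p < 1 / 2 \<Longrightarrow> (\<forall>e\<in>set es. e) \<Longrightarrow> es \<noteq> [] \<Longrightarrow> k \<le> int c \<Longrightarrow>
    real B * measure_pmf.prob (alg_run p c es k B) {x. \<not> fst x}
      \<le> (real (length es) * real c - real_of_int k) / (1 - 2 * p)"
proof (induction p c es k B rule: alg_run.induct)
  case (1 p c k B)
  then show ?case by simp
next
  case (2 p c e es k B)
  have e: e using "2.prems" by simp
  have L: "real (length (e # es)) \<ge> 1" by simp
  have pos: "1 - 2 * p > 0" using "2.prems" by simp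
  show ?case
  proof (cases "k < int c \<and> B > 0")
    case True
    define P1 where "P1 = measure_pmf.prob (alg_run p c (e # es) (k + 1) (B - 1)) {x. \<not> fst x}"
    define P2 where "P2 = measure_pmf.prob (alg_run p c (e # es) (k - 1) (B - 1)) {x. \<not> fst x}"
    have eq: "measure_pmf.prob (alg_run p c (e # es) k B) {x. \<not> fst x} = (1 - p) * P1 + p * P2"
      using True "2.prems" e by (simp add: run_step prob_noisy_bind P1_def P2_def)
    have IH1: "real (B - 1) * P1 \<le> (real (length (e # es)) * real c - real_of_int (k + 1)) / (1 - 2 * p)"
      using "2.IH"(1)[OF True, of True] "2.prems" True e unfolding P1_def by (simp add: set_noisy)
    have IH2: "real (B - 1) * P2 \<le> (real (length (e # es)) * real c - real_of_int (k - 1)) / (1 - 2 * p)"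
      using "2.IH"(1)[OF True, of False] "2.prems" True e unfolding P2_def by (simp add: set_noisy)
    have P1: "P1 \<le> 1" "P2 \<le> 1" unfolding P1_def P2_def by simp_all
    have RB: "real B = real (B - 1) + 1" using True by simp
    define D where "D = real (length (e # es)) * real c - real_of_int k"
    have "real B * ((1 - p) * P1 + p * P2) = (1 - p) * (real (B - 1) * P1) + p * (real (B - 1) * P2) + ((1 - p) * P1 + p * P2)"
      unfolding RB by (simp add: algebra_simps)
    also have "\<dots> \<le> (1 - p) * ((D - 1) / (1 - 2 * p)) + p * ((D + 1) / (1 - 2 * p)) + ((1 - p) * 1 + p * 1)"
      apply (intro add_mono mult_left_mono)
      using IH1 IH2 P1 "2.prems" unfolding D_def by (auto simp: algebra_simps)
    also have "\<dots> = D / (1 - 2 * p)"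
    proof -
      have a: "(1 - p) * ((D - 1) / (1 - 2 * p)) + p * ((D + 1) / (1 - 2 * p))
          = ((1 - p) * (D - 1) + p * (D + 1)) / (1 - 2 * p)"
        by (metis add_divide_distrib times_divide_eq_right)
      have b: "(1 - p) * (D - 1) + p * (D + 1) = D - (1 - 2 * p)" by (simp add: algebra_simps)
      have c: "(D - (1 - 2 * p)) / (1 - 2 * p) + 1 = D / (1 - 2 * p)"
        using pos by (simp add: diff_divide_distrib)
      show ?thesis using a b c by simp
    qed
    finally show ?thesis using eq unfolding D_def by simp
  next
    case False
    show ?thesis
    proof (cases "B = 0")
      case True
      have "real (length (e # es)) * real c - real_of_int k \<ge> 0"
        using L "2.prems" by (smt (verit) mult_le_cancel_right1 of_int_of_nat_eq of_int_le_iff of_nat_0_le_iff)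
      then show ?thesis using True pos by simp
    next
      case B: False
      have kc: "k = int c" using False B "2.prems" by simp
      show ?thesis
      proof (cases "es = []")
        case True
        then show ?thesis using run_next[OF False] B kc by simp
      next
        case ne: False
        have "real B * measure_pmf.prob (alg_run p c es 0 B) {x. \<not> fst x}
          \<le> (real (length es) * real c - real_of_int 0) / (1 - 2 * p)"
          using "2.IH"(2)[OF False B] "2.prems" ne by auto
        then show ?thesis using run_next[OF False B] kc by (simp add: algebra_simps)
      qed
    qed
  qed
qed

lemma disc_bound:
  shows "0 < p \<Longrightarrow> p < 1 / 2 \<Longrightarrow> (\<exists>e\<in>set es. \<not> e) \<Longrightarrow>
    measure_pmf.prob (alg_run p c es k B) {x. fst x}
      \<le> (if hd es then (p / (1 - p)) powr real c else (p / (1 - p)) powr (real c - real_of_int k))"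
proof (induction p c es k B rule: alg_run.induct)
  case (1 p c k B)
  then show ?case by simp
next
  case (2 p c e es k B)
  define \<rho> where "\<rho> = p / (1 - p)"
  have \<rho>: "0 < \<rho>" "\<rho> < 1" using "2.prems" unfolding \<rho>_def by (auto simp: field_simps)
  show ?case
  proof (cases "k < int c \<and> B > 0")
    case True
    define P1 where "P1 = measure_pmf.prob (alg_run p c (e # es) (k + 1) (B - 1)) {x. fst x}"
    define P2 where "P2 = measure_pmf.prob (alg_run p c (e # es) (k - 1) (B - 1)) {x. fst x}"
    have IH1: "P1 \<le> (if e then \<rho> powr real c else \<rho> powr (real c - real_of_int (k + 1)))"
      using "2.IH"(1)[OF True, of True] "2.prems" True unfolding P1_def \<rho>_def by (cases e) (auto simp: set_noisy)
    have IH2: "P2 \<le> (if e then \<rho> powr real c else \<rho> powr (real c - real_of_int (k - 1)))"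
      using "2.IH"(1)[OF True, of False] "2.prems" True unfolding P2_def \<rho>_def by (cases e) (auto simp: set_noisy)
    show ?thesis
    proof (cases e)
      case e: True
      have eq: "measure_pmf.prob (alg_run p c (e # es) k B) {x. fst x} = (1 - p) * P1 + p * P2"
        using True "2.prems" e by (simp add: run_step prob_noisy_bind P1_def P2_def)
      have "(1 - p) * P1 + p * P2 \<le> (1 - p) * \<rho> powr real c + p * \<rho> powr real c"
        using IH1 IH2 e "2.prems" by (intro add_mono mult_left_mono) auto
      then show ?thesis using eq e unfolding \<rho>_def by (simp add: algebra_simps)
    next
      case e: False
      have eq: "measure_pmf.prob (alg_run p c (e # es) k B) {x. fst x} = (1 - p) * P2 + p * P1"
        using True "2.prems" e by (simp add: run_step prob_noisy_bind P1_def P2_def)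
      define X where "X = \<rho> powr (real c - real_of_int k)"
      have A: "\<rho> powr (real c - real_of_int (k + 1)) = X / \<rho>"
        proof -
        have "real c - real_of_int (k + 1) = (real c - real_of_int k) - 1" by simp
        then show ?thesis unfolding X_def using \<rho> by (simp only: powr_diff powr_one)
      qed
      have Bq: "\<rho> powr (real c - real_of_int (k - 1)) = X * \<rho>"
        proof -
        have "real c - real_of_int (k - 1) = (real c - real_of_int k) + 1" by simp
        then show ?thesis unfolding X_def using \<rho> by (simp only: powr_add powr_one)
      qed
      have "(1 - p) * P2 + p * P1 \<le> (1 - p) * (X * \<rho>) + p * (X / \<rho>)"
        using IH1 IH2 e "2.prems" A Bq by (intro add_mono mult_left_mono) auto
      also have "\<dots> = X"
        using "2.prems" unfolding \<rho>_def by (simp add: field_simps)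
      finally show ?thesis using eq e unfolding X_def \<rho>_def by simp
    qed
  next
    case False
    show ?thesis
    proof (cases "B = 0")
      case True
      then show ?thesis using run_zero[OF False True] by simp
    next
      case B: False
      show ?thesis
      proof (cases e)
        case e: False
        have kc: "real c - real_of_int k \<le> 0" using False B by simp
        have "\<rho> powr 0 \<le> \<rho> powr (real c - real_of_int k)"
          using kc \<rho> by (intro powr_mono') auto
        then have "1 \<le> \<rho> powr (real c - real_of_int k)" using \<rho> by simp
        moreover have "measure_pmf.prob (alg_run p c (e # es) k B) {x. fst x} \<le> 1" by simp
        ultimately have "measure_pmf.prob (alg_run p c (e # es) k B) {x. fst x} \<le> \<rho> powr (real c - real_of_int k)"
          by linarith
        then show ?thesis using e unfolding \<rho>_def by simp
      next
        case e: True
        have "\<exists>e\<in>set es. \<not> e" using "2.prems" e by auto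
        then have "measure_pmf.prob (alg_run p c es 0 B) {x. fst x} \<le> (p / (1 - p)) powr real c"
          using "2.IH"(2)[OF False B] "2.prems" by (auto split: if_splits)
        then show ?thesis using run_next[OF False B] e by simp
      qed
    qed
  qed
qed

lemma prob_fst_compl:
  "measure_pmf.prob M {x. fst x} = 1 - measure_pmf.prob M {x. \<not> fst x}"
proof -
  have "{x. fst x} = space (measure_pmf M) - {x. \<not> fst x}" by auto
  moreover have "measure_pmf.prob M (space (measure_pmf M) - {x. \<not> fst x}) = 1 - measure_pmf.prob M {x. \<not> fst x}"
    by (rule measure_pmf.prob_compl) simp
  ultimately show ?thesis by simp
qed

lemma threshold_props:
  assumes "0 < p" "p < 1 / 2" "0 < \<delta>" "\<delta> < 1"
  shows "threshold p \<delta> \<ge> 1" "(p / (1 - p)) powr real (threshold p \<delta>) \<le> \<delta>"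
    "real (threshold p \<delta>) \<le> ln (1 / \<delta>) / ln ((1 - p) / p) + 1"
proof -
  define r where "r = (1 - p) / p"
  have r: "r > 1" using assms unfolding r_def by (auto simp: field_simps)
  have lpos: "log r (1 / \<delta>) > 0" using r assms by simp
  have ceq: "threshold p \<delta> = nat \<lceil>log r (1 / \<delta>)\<rceil>" unfolding threshold_def r_def by simp
  have cpos: "0 < \<lceil>log r (1 / \<delta>)\<rceil>" using lpos by simp
  have cge: "real (threshold p \<delta>) \<ge> log r (1 / \<delta>)"
  proof -
    have "real (threshold p \<delta>) = real_of_int \<lceil>log r (1 / \<delta>)\<rceil>" unfolding ceq using cpos by simp
    moreover have "log r (1 / \<delta>) \<le> real_of_int \<lceil>log r (1 / \<delta>)\<rceil>" by (rule le_of_int_ceiling)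
    ultimately show ?thesis by simp
  qed
  show "threshold p \<delta> \<ge> 1" unfolding ceq using cpos by arith
  show "real (threshold p \<delta>) \<le> ln (1 / \<delta>) / ln ((1 - p) / p) + 1"
    unfolding ceq using lpos by (simp add: log_def r_def)
  have "1 / \<delta> = r powr (log r (1 / \<delta>))" using r assms by simp
  also have "\<dots> \<le> r powr real (threshold p \<delta>)" using cge r by (intro powr_mono) auto
  finally have A: "1 / \<delta> \<le> r powr real (threshold p \<delta>)" .
  have "p / (1 - p) = inverse r" unfolding r_def by simp
  then have "(p / (1 - p)) powr real (threshold p \<delta>) = inverse (r powr real (threshold p \<delta>))"
    by (simp add: inverse_powr)
  also have "\<dots> \<le> inverse (1 / \<delta>)"
    by (rule le_imp_inverse_le) (use A assms in auto)
  also have "\<dots> = \<delta>" by simp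
  finally show "(p / (1 - p)) powr real (threshold p \<delta>) \<le> \<delta>" .
qed

theorem theorem1:
  fixes p :: real
  assumes "0 < p" and "p < 1 / 2"
  shows "(\<forall>\<epsilon> \<delta> T. 0 < \<epsilon> \<and> \<epsilon> < 1 \<and> 0 < \<delta> \<and> \<delta> < 1 \<and> (\<forall>e\<in>set T. e) \<longrightarrow>
            measure_pmf.prob (alg_A p \<epsilon> \<delta> T) {x. fst x} \<ge> 1 - \<epsilon>)
       \<and> (\<forall>\<epsilon> \<delta> T. 0 < \<epsilon> \<and> \<epsilon> < 1 \<and> 0 < \<delta> \<and> \<delta> < 1 \<and> (\<exists>e\<in>set T. \<not> e) \<longrightarrow>
            measure_pmf.prob (alg_A p \<epsilon> \<delta> T) {x. \<not> fst x} \<ge> 1 - \<delta>)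
       \<and> (\<exists>C. \<forall>\<epsilon> \<delta> T. 0 < \<epsilon> \<and> \<epsilon> < 1 \<and> 0 < \<delta> \<and> \<delta> \<le> 1 / 2 \<longrightarrow>
            (\<forall>x\<in>set_pmf (alg_A p \<epsilon> \<delta> T).
               real (snd x) \<le> C * (1 / \<epsilon>) * real (length T) * ln (1 / \<delta>)))"
proof (intro conjI allI impI)
  have pos: "1 - 2 * p > 0" using assms by simp
  have s1: "1 / (1 - 2 * p) \<ge> 1" using assms by (simp add: field_simps)
  fix \<epsilon> \<delta> :: real and T :: "bool list"
  assume H: "0 < \<epsilon> \<and> \<epsilon> < 1 \<and> 0 < \<delta> \<and> \<delta> < 1 \<and> (\<forall>e\<in>set T. e)"
  show "measure_pmf.prob (alg_A p \<epsilon> \<delta> T) {x. fst x} \<ge> 1 - \<epsilon>"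
  proof (cases "T = []")
    case True
    then show ?thesis using H by (simp add: alg_A_def)
  next
    case False
    define c where "c = threshold p \<delta>"
    define N where "N = nat \<lceil>(1 / \<epsilon>) * (1 / (1 - 2 * p))\<rceil>"
    define n where "n = length T"
    define PF where "PF = measure_pmf.prob (alg_A p \<epsilon> \<delta> T) {x. \<not> fst x}"
    have c1: "c \<ge> 1" unfolding c_def using threshold_props(1)[OF assms] H by simp
    have n1: "n \<ge> 1" unfolding n_def using False by (cases T) auto
    have Bdef: "budget p \<epsilon> \<delta> (length T) = N * c * n" unfolding budget_def N_def c_def n_def by simp
    have NB: "real N \<ge> (1 / \<epsilon>) * (1 / (1 - 2 * p))" unfolding N_def by linarith
    have Npos: "(1 / \<epsilon>) * (1 / (1 - 2 * p)) > 0" using H pos by simp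
    have main: "real (N * c * n) * PF \<le> (real n * real c - 0) / (1 - 2 * p)"
      using conn_bound[OF assms, of T 0 c "N * c * n"] H False c1
      unfolding PF_def alg_A_def Bdef n_def c_def by auto
    have Bge: "real (N * c * n) \<ge> (real n * real c) * ((1 / \<epsilon>) * (1 / (1 - 2 * p)))"
    proof -
      have "real (N * c * n) = (real n * real c) * real N" by simp
      moreover have "(real n * real c) * real N \<ge> (real n * real c) * ((1 / \<epsilon>) * (1 / (1 - 2 * p)))"
        using NB by (intro mult_left_mono) auto
      ultimately show ?thesis by linarith
    qed
    have nc: "real n * real c > 0" using n1 c1 by simp
    have PF0: "PF \<ge> 0" unfolding PF_def by simp
    have "(real n * real c) * ((1 / \<epsilon>) * (1 / (1 - 2 * p))) * PF \<le> real (N * c * n) * PF"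
      using Bge PF0 by (intro mult_right_mono) auto
    with main have "(real n * real c) * ((1 / \<epsilon>) * (1 / (1 - 2 * p))) * PF \<le> (real n * real c) * (1 / (1 - 2 * p))"
      by simp
    then have "((1 / \<epsilon>) * (1 / (1 - 2 * p))) * PF \<le> (1 / (1 - 2 * p))"
      using nc by (metis mult.assoc mult_le_cancel_left_pos)
    then have "PF * (1 - 2 * p) \<le> \<epsilon> * (1 - 2 * p)" using H pos by (simp add: field_simps)
    then have "PF \<le> \<epsilon>" using pos by (metis mult_le_cancel_right_pos)
    then show ?thesis using prob_fst_compl[of "alg_A p \<epsilon> \<delta> T"] by (simp add: PF_def)
  qed
next
  fix \<epsilon> \<delta> :: real and T :: "bool list"
  assume H: "0 < \<epsilon> \<and> \<epsilon> < 1 \<and> 0 < \<delta> \<and> \<delta> < 1 \<and> (\<exists>e\<in>set T. \<not> e)"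
  then obtain e es where T: "T = e # es" by (cases T) auto
  have "measure_pmf.prob (alg_A p \<epsilon> \<delta> T) {x. fst x} \<le> (p / (1 - p)) powr real (threshold p \<delta>)"
    using disc_bound[OF assms, of T "threshold p \<delta>" 0 "budget p \<epsilon> \<delta> (length T)"] H T
    unfolding alg_A_def by (simp split: if_splits)
  also have "\<dots> \<le> \<delta>" using threshold_props(2)[OF assms] H by simp
  finally show "measure_pmf.prob (alg_A p \<epsilon> \<delta> T) {x. \<not> fst x} \<ge> 1 - \<delta>"
    using prob_fst_compl[of "alg_A p \<epsilon> \<delta> T"] by simp
next
  show "\<exists>C. \<forall>\<epsilon> \<delta> T. 0 < \<epsilon> \<and> \<epsilon> < 1 \<and> 0 < \<delta> \<and> \<delta> \<le> 1 / 2 \<longrightarrow>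
            (\<forall>x\<in>set_pmf (alg_A p \<epsilon> \<delta> T).
               real (snd x) \<le> C * (1 / \<epsilon>) * real (length T) * ln (1 / \<delta>))"
  proof (intro exI allI impI ballI)
    define s where "s = 1 / (1 - 2 * p)"
    define L where "L = ln ((1 - p) / p)"
    have s1: "s \<ge> 1" unfolding s_def using assms by (simp add: field_simps)
    have r1: "(1 - p) / p > 1" using assms by (simp add: field_simps)
    have Lpos: "L > 0" unfolding L_def using r1 by (simp add: ln_gt_zero)
    fix \<epsilon> \<delta> :: real and T :: "bool list" and x
    assume H: "0 < \<epsilon> \<and> \<epsilon> < 1 \<and> 0 < \<delta> \<and> \<delta> \<le> 1 / 2"
    assume x: "x \<in> set_pmf (alg_A p \<epsilon> \<delta> T)"
    define N where "N = nat \<lceil>(1 / \<epsilon>) * (1 / (1 - 2 * p))\<rceil>"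
    define c where "c = threshold p \<delta>"
    define n where "n = length T"
    define lg where "lg = ln (1 / \<delta>)"
    have sx0: "snd x \<le> N * c * n"
      using queries_le[OF x[unfolded alg_A_def]] unfolding budget_def N_def c_def n_def by simp
    have sx: "real (snd x) \<le> real N * real c * real n"
      using sx0 by (metis of_nat_le_iff of_nat_mult)
    have e1: "1 / \<epsilon> \<ge> 1" using H by simp
    have "(1::real) * 1 \<le> (1 / \<epsilon>) * s" using e1 s1 H by (intro mult_mono) auto
    then have y1: "(1 / \<epsilon>) * s \<ge> 1" by simp
    have N2: "real N \<le> 2 * s / \<epsilon>"
    proof -
      have N': "N = nat \<lceil>(1 / \<epsilon>) * s\<rceil>" unfolding N_def s_def by simp
      have "0 \<le> \<lceil>(1 / \<epsilon>) * s\<rceil>" using y1 by linarith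
      then have "real N = real_of_int \<lceil>(1 / \<epsilon>) * s\<rceil>" unfolding N' by simp
      also have "\<dots> \<le> (1 / \<epsilon>) * s + 1" by linarith
      also have "\<dots> \<le> 2 * s / \<epsilon>"
      proof -
        have "2 * s / \<epsilon> = 2 * ((1 / \<epsilon>) * s)" by simp
        then show ?thesis using y1 by linarith
      qed
      finally show ?thesis .
    qed
    have d2: "2 \<le> 1 / \<delta>" using H by (simp add: field_simps)
    have l2: "lg \<ge> ln 2" unfolding lg_def using ln_le_cancel_iff[of 2 "1 / \<delta>"] d2 H by simp
    have ln2: "ln (2::real) > 0" by simp
    have cK: "real c \<le> lg * (1 / L + 1 / ln 2)"
    proof -
      have "real c \<le> lg / L + 1" unfolding c_def lg_def L_def using threshold_props(3)[OF assms] H by simp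
      moreover have "1 \<le> lg / ln 2" using l2 ln2 by simp
      moreover have "lg * (1 / L + 1 / ln 2) = lg / L + lg / ln 2" by (simp add: algebra_simps)
      ultimately show ?thesis by linarith
    qed
    have "real N * real c \<le> (2 * s / \<epsilon>) * (lg * (1 / L + 1 / ln 2))"
      using N2 cK by (intro mult_mono) auto
    then have "real N * real c * real n \<le> (2 * s / \<epsilon>) * (lg * (1 / L + 1 / ln 2)) * real n"
      by (intro mult_right_mono) auto
    also have "\<dots> = (2 * s * (1 / L + 1 / ln 2)) * (1 / \<epsilon>) * real n * lg"
      by (simp add: algebra_simps)
    finally show "real (snd x) \<le> (2 * s * (1 / L + 1 / ln 2)) * (1 / \<epsilon>) * real (length T) * ln (1 / \<delta>)"
      using sx unfolding n_def lg_def by simp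
  qed
qed

end
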